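(* Let $C$ be a binary quasi-cyclic code whose parity-check matrix, after permuting rows and columns, is an $s\lambda\times s\rho$ array of $L\times L$ circulant matrices over $\mathrm{GF}(2)$, with $s\lambda\times s\rho$ weight matrix $A=(a_{x,y})$. For $S\subseteq\{1,\dots,s\rho\}$ with $|S|=s\lambda+1$, define $$\psi(S)=\sum_{\substack{S'\subset S\\ S'=\{i_1,\dots,i_{s\lambda}\}}}\ \sum_{\sigma\in\Pi} a_{\sigma(1),i_1}a_{\sigma(2),i_2}\cdots a_{\sigma(s\lambda),i_{s\lambda}},$$ where $\Pi$ is the set of all permutations of $\{1,\dots,s\lambda\}$. In other words, $\psi(S)$ is the sum, over all $s\lambda$-element subsets $S'$ of $S$, of the permanent of the submatrix of $A$ formed by the columns in $S'$. Then $$d_{\min}(C)\le \min\{\psi(S): S\subseteq\{1,\dots,s\rho\},\ |S|=s\lambda+1,\ \psi(S)\ne 0\}.$$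
   Context: $s,\lambda,\rho,L$ are positive integers. The weight matrix $A$ of such a parity-check matrix has entry $a_{x,y}$ equal to the number of ones in any row of the circulant block in block-row $x$ and block-column $y$. $d_{\min}(C)$ denotes the minimum Hamming weight of a nonzero codeword of $C$. *)

theory Defs
  imports Main "HOL-Combinatorics.Permutations" "HOL-Library.Extended_Nat"
begin

text \<open>Binary matrices are functions nat => nat => bool (True = 1 in GF(2)), indices 0-based.
  A binary vector of length N is identified with its support, a subset of {..<N}.\<close>

definition code :: "nat \<Rightarrow> nat \<Rightarrow> (nat \<Rightarrow> nat \<Rightarrow> bool) \<Rightarrow> nat set set" where
  "code M N H = {c. c \<subseteq> {..<N} \<and> (\<forall>r<M. even (card {j\<in>c. H r j}))}"

text \<open>Minimum Hamming weight of a nonzero codeword (infinity if there is none).\<close>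
definition dmin :: "nat set set \<Rightarrow> enat" where
  "dmin C = Inf {enat (card c) | c. c \<in> C \<and> c \<noteq> {}}"

definition block_circulant :: "nat \<Rightarrow> nat \<Rightarrow> nat \<Rightarrow> (nat \<Rightarrow> nat \<Rightarrow> bool) \<Rightarrow> bool" where
  "block_circulant m n L B \<longleftrightarrow>
     (\<forall>x<m. \<forall>y<n. \<forall>i<L. \<forall>j<L.
        B (x*L + i) (y*L + j) = B (x*L) (y*L + (j + L - i) mod L))"

text \<open>Weight matrix: a x y = number of ones in (any, here the first) row of block (x,y).\<close>
definition weight_matrix :: "nat \<Rightarrow> (nat \<Rightarrow> nat \<Rightarrow> bool) \<Rightarrow> nat \<Rightarrow> nat \<Rightarrow> nat" where
  "weight_matrix L B x y = card {j. j < L \<and> B (x*L) (y*L + j)}"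

definition perm_cols :: "(nat \<Rightarrow> nat \<Rightarrow> nat) \<Rightarrow> nat \<Rightarrow> nat set \<Rightarrow> nat" where
  "perm_cols A m S' = (\<Sum>\<sigma>\<in>{\<sigma>. \<sigma> permutes {..<m}}.
      \<Prod>k<m. A (\<sigma> k) (sorted_list_of_set S' ! k))"

definition psi :: "(nat \<Rightarrow> nat \<Rightarrow> nat) \<Rightarrow> nat \<Rightarrow> nat set \<Rightarrow> nat" where
  "psi A m S = (\<Sum>S'\<in>{S'. S' \<subseteq> S \<and> card S' = m}. perm_cols A m S')"

end

theory Submission
  imports Defs "HOL-Library.FuncSet" "HOL-Library.Z2" "HOL-Computational_Algebra.Polynomial"
begin

definition Bij :: "'a set \<Rightarrow> 'b set \<Rightarrow> ('a \<Rightarrow> 'b) set" where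
  "Bij T V = {f. bij_betw f T V \<and> f \<in> extensional T}"

definition pm :: "('a \<Rightarrow> 'b \<Rightarrow> 'c::comm_semiring_1) \<Rightarrow> 'a set \<Rightarrow> 'b set \<Rightarrow> 'c" where
  "pm M T V = (\<Sum>f\<in>Bij T V. \<Prod>x\<in>T. M x (f x))"

lemma Bij_finite: assumes "finite T" "finite V" shows "finite (Bij T V)"
proof -
  have "Bij T V \<subseteq> PiE T (\<lambda>_. V)" unfolding Bij_def PiE_def Pi_def bij_betw_def by auto
  moreover have "finite (PiE T (\<lambda>_. V))" using assms by (simp add: finite_PiE)
  ultimately show ?thesis by (rule finite_subset)
qed

lemma Bij_split:
  assumes "r \<in> T"
  shows "Bij T V = (\<Union>v\<in>V. (\<lambda>g. g(r:=v)) ` Bij (T-{r}) (V-{v}))"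
proof (intro equalityI subsetI)
  fix f assume f: "f \<in> Bij T V"
  hence b: "bij_betw f T V" and e: "f \<in> extensional T" by (auto simp: Bij_def)
  have fr: "f r \<in> V" using b assms bij_betwE by blast
  have "bij_betw f (T - {r}) (V - {f r})"
    by (rule bij_betw_DiffI[OF b]) (use assms fr in auto)
  moreover have "bij_betw (f(r:=undefined)) (T - {r}) (V - {f r}) = bij_betw f (T - {r}) (V - {f r})"
    by (rule bij_betw_cong) auto
  ultimately have "bij_betw (f(r:=undefined)) (T - {r}) (V - {f r})" by simp
  moreover have "f(r:=undefined) \<in> extensional (T-{r})" using e by (auto simp: extensional_def)
  ultimately have "f(r:=undefined) \<in> Bij (T-{r}) (V-{f r})" by (simp add: Bij_def)
  moreover have "f = (f(r:=undefined))(r := f r)" by simp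
  ultimately show "f \<in> (\<Union>v\<in>V. (\<lambda>g. g(r:=v)) ` Bij (T-{r}) (V-{v}))" using fr by blast
next
  fix f assume "f \<in> (\<Union>v\<in>V. (\<lambda>g. g(r:=v)) ` Bij (T-{r}) (V-{v}))"
  then obtain v g where v: "v \<in> V" and g: "g \<in> Bij (T-{r}) (V-{v})" and f: "f = g(r:=v)" by blast
  have gb: "bij_betw g (T-{r}) (V-{v})" and ge: "g \<in> extensional (T-{r})" using g by (auto simp: Bij_def)
  have "bij_betw f (T-{r}) (V-{v}) = bij_betw g (T-{r}) (V-{v})"
    unfolding f by (rule bij_betw_cong) auto
  hence fb: "bij_betw f (T-{r}) (V-{v})" using gb by simp
  have "bij_betw f ((T-{r}) \<union> {r}) ((V-{v}) \<union> {f r})"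
    by (rule notIn_Un_bij_betw[OF _ _ fb]) (simp_all add: f)
  hence "bij_betw f T V" using assms v f by (simp add: insert_absorb)
  moreover have "f \<in> extensional T" using ge f assms by (auto simp: extensional_def)
  ultimately show "f \<in> Bij T V" by (simp add: Bij_def)
qed

lemma pm_laplace:
  assumes "finite T" "finite V" "r \<in> T"
  shows "pm M T V = (\<Sum>v\<in>V. M r v * pm M (T-{r}) (V-{v}))"
proof -
  have "pm M T V = (\<Sum>v\<in>V. \<Sum>f\<in>(\<lambda>g. g(r:=v)) ` Bij (T-{r}) (V-{v}). \<Prod>x\<in>T. M x (f x))"
    unfolding pm_def Bij_split[OF assms(3)]
  proof (rule sum.UNION_disjoint)
    show "finite V" by fact
    show "\<forall>i\<in>V. finite ((\<lambda>g. g(r := i)) ` Bij (T - {r}) (V - {i}))"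
      using assms by (auto intro: Bij_finite)
    show "\<forall>i\<in>V. \<forall>j\<in>V. i \<noteq> j \<longrightarrow> (\<lambda>g. g(r := i)) ` Bij (T - {r}) (V - {i}) \<inter> (\<lambda>g. g(r := j)) ` Bij (T - {r}) (V - {j}) = {}"
    proof (intro ballI impI)
      fix i j :: 'b assume ij: "i \<noteq> j"
      show "(\<lambda>g. g(r := i)) ` Bij (T - {r}) (V - {i}) \<inter> (\<lambda>g. g(r := j)) ` Bij (T - {r}) (V - {j}) = {}"
      proof (rule equals0I)
        fix f assume "f \<in> (\<lambda>g. g(r := i)) ` Bij (T - {r}) (V - {i}) \<inter> (\<lambda>g. g(r := j)) ` Bij (T - {r}) (V - {j})"
        then obtain g h where f1: "f = g(r:=i)" and f2: "f = h(r:=j)" by blast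
        have "f r = i" using f1 by simp
        moreover have "f r = j" using f2 by simp
        ultimately have "i = j" by simp
        with ij show False by simp
      qed
    qed
  qed
  also have "\<dots> = (\<Sum>v\<in>V. M r v * pm M (T-{r}) (V-{v}))"
  proof (rule sum.cong[OF refl])
    fix v assume v: "v \<in> V"
    have inj: "inj_on (\<lambda>g. g(r:=v)) (Bij (T-{r}) (V-{v}))"
    proof (rule inj_onI)
      fix g h assume gh: "g \<in> Bij (T-{r}) (V-{v})" "h \<in> Bij (T-{r}) (V-{v})" and eq: "g(r:=v) = h(r:=v)"
      have "g r = undefined" "h r = undefined" using gh by (auto simp: Bij_def extensional_def)
      hence grh: "g r = h r" by simp
      show "g = h"
      proof
        fix x show "g x = h x" using fun_cong[OF eq, of x] grh by (cases "x = r") auto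
      qed
    qed
    have "(\<Sum>f\<in>(\<lambda>g. g(r:=v)) ` Bij (T-{r}) (V-{v}). \<Prod>x\<in>T. M x (f x))
        = (\<Sum>g\<in>Bij (T-{r}) (V-{v}). \<Prod>x\<in>T. M x ((g(r:=v)) x))"
      by (rule sum.reindex[OF inj, unfolded comp_def])
    also have "\<dots> = (\<Sum>g\<in>Bij (T-{r}) (V-{v}). M r v * (\<Prod>x\<in>T-{r}. M x (g x)))"
    proof (rule sum.cong[OF refl])
      fix g
      have "(\<Prod>x\<in>T. M x ((g(r:=v)) x)) = M r v * (\<Prod>x\<in>T-{r}. M x ((g(r:=v)) x))"
        using assms by (simp add: prod.remove)
      also have "(\<Prod>x\<in>T-{r}. M x ((g(r:=v)) x)) = (\<Prod>x\<in>T-{r}. M x (g x))"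
        by (rule prod.cong) auto
      finally show "(\<Prod>x\<in>T. M x ((g(r:=v)) x)) = M r v * (\<Prod>x\<in>T-{r}. M x (g x))" .
    qed
    also have "\<dots> = M r v * pm M (T-{r}) (V-{v})" by (simp add: pm_def sum_distrib_left)
    finally show "(\<Sum>f\<in>(\<lambda>g. g(r:=v)) ` Bij (T-{r}) (V-{v}). \<Prod>x\<in>T. M x (f x)) = M r v * pm M (T-{r}) (V-{v})" .
  qed
  finally show ?thesis .
qed

lemma pm_step_le:
  fixes A :: "'a \<Rightarrow> 'b \<Rightarrow> nat"
  assumes "finite T" "finite V" "r \<notin> T" "w \<notin> V" "A r w \<ge> 1"
  shows "pm A T V \<le> pm A (insert r T) (insert w V)"
proof -
  have "pm A (insert r T) (insert w V) = (\<Sum>v\<in>insert w V. A r v * pm A T (insert w V - {v}))"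
    using assms pm_laplace[of "insert r T" "insert w V" r A] by simp
  also have "\<dots> \<ge> A r w * pm A T (insert w V - {w})"
    by (rule member_le_sum) (use assms in auto)
  also have "insert w V - {w} = V" using assms by auto
  finally have "A r w * pm A T V \<le> pm A (insert r T) (insert w V)" .
  moreover have "pm A T V \<le> A r w * pm A T V" using assms(5) by simp
  ultimately show ?thesis by linarith
qed

lemma pm_extend_le:
  fixes A :: "'a \<Rightarrow> 'b \<Rightarrow> nat"
  assumes "finite D"
  shows "finite T \<Longrightarrow> finite V \<Longrightarrow> T \<inter> D = {} \<Longrightarrow> V \<inter> \<nu> ` D = {} \<Longrightarrow> inj_on \<nu> D \<Longrightarrow>
    (\<forall>r\<in>D. A r (\<nu> r) \<ge> 1) \<Longrightarrow> pm A T V \<le> pm A (T \<union> D) (V \<union> \<nu> ` D)"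
  using assms
proof (induction D rule: finite_induct)
  case empty thus ?case by simp
next
  case (insert d D)
  have "pm A T V \<le> pm A (T \<union> D) (V \<union> \<nu> ` D)" using insert by auto
  also have "\<dots> \<le> pm A (insert d (T \<union> D)) (insert (\<nu> d) (V \<union> \<nu> ` D))"
    using insert by (intro pm_step_le) auto
  finally show ?case by simp
qed

lemma sym_pairs_zero:
  fixes g :: "'b \<Rightarrow> 'b \<Rightarrow> 'c::comm_ring_1"
  assumes "finite V" "\<And>u v. g u v = g v u" "\<And>x::'c. x + x = 0"
  shows "(\<Sum>u\<in>V. \<Sum>v\<in>V-{u}. g u v) = 0"
  using assms(1)
proof (induction V rule: finite_induct)
  case empty thus ?case by simp
next
  case (insert a V)
  have "(\<Sum>u\<in>insert a V. \<Sum>v\<in>insert a V-{u}. g u v)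
      = (\<Sum>v\<in>V. g a v) + (\<Sum>u\<in>V. \<Sum>v\<in>insert a V-{u}. g u v)"
    using insert by (simp add: insert_Diff_if)
  also have "(\<Sum>u\<in>V. \<Sum>v\<in>insert a V-{u}. g u v) = (\<Sum>u\<in>V. g u a + (\<Sum>v\<in>V-{u}. g u v))"
  proof (rule sum.cong[OF refl])
    fix u assume "u \<in> V"
    hence "insert a V - {u} = insert a (V - {u})" using insert by auto
    thus "(\<Sum>v\<in>insert a V-{u}. g u v) = g u a + (\<Sum>v\<in>V-{u}. g u v)" using insert by simp
  qed
  also have "\<dots> = (\<Sum>u\<in>V. g u a) + 0" using insert by (simp add: sum.distrib)
  also have "(\<Sum>v\<in>V. g a v) + ((\<Sum>u\<in>V. g u a) + 0) = (\<Sum>v\<in>V. g a v) + (\<Sum>v\<in>V. g a v)"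
    using assms(2) by simp
  also have "\<dots> = 0" by (rule assms(3))
  finally show ?case .
qed

lemma pm_repeated_row:
  fixes M :: "'a \<Rightarrow> 'b \<Rightarrow> 'c::comm_ring_1"
  assumes "finite T" "finite V" "r \<in> T" "\<And>x::'c. x + x = 0"
  shows "(\<Sum>u\<in>V. M r u * pm M T (V-{u})) = 0"
proof -
  have "(\<Sum>u\<in>V. M r u * pm M T (V-{u})) = (\<Sum>u\<in>V. \<Sum>v\<in>V-{u}. M r u * M r v * pm M (T-{r}) (V-{u}-{v}))"
  proof (rule sum.cong[OF refl])
    fix u assume "u \<in> V"
    have "pm M T (V-{u}) = (\<Sum>v\<in>V-{u}. M r v * pm M (T-{r}) (V-{u}-{v}))"
      by (rule pm_laplace) (use assms in auto)
    thus "M r u * pm M T (V-{u}) = (\<Sum>v\<in>V-{u}. M r u * M r v * pm M (T-{r}) (V-{u}-{v}))"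
      by (simp add: sum_distrib_left mult.assoc)
  qed
  also have "\<dots> = 0"
  proof (rule sym_pairs_zero)
    show "finite V" by fact
    show "\<And>x::'c. x + x = 0" by fact
    fix u v
    have "V-{u}-{v} = V-{v}-{u}" by blast
    thus "M r u * M r v * pm M (T-{r}) (V-{u}-{v}) = M r v * M r u * pm M (T-{r}) (V-{v}-{u})"
      by (simp add: mult.commute)
  qed
  finally show ?thesis .
qed


definition fL :: "nat \<Rightarrow> bit poly" where "fL L = monom 1 L - 1"
definition red :: "nat \<Rightarrow> bit poly \<Rightarrow> bit poly" where "red L p = p mod fL L"
definition psupp :: "bit poly \<Rightarrow> nat set" where "psupp p = {n. coeff p n \<noteq> 0}"
definition wt :: "bit poly \<Rightarrow> nat" where "wt p = card (psupp p)"
definition W :: "nat \<Rightarrow> bit poly \<Rightarrow> nat" where "W L p = wt (red L p)"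

lemma supp_fin [simp]: "finite (psupp p)"
proof -
  have "psupp p \<subseteq> {..degree p}" unfolding psupp_def using le_degree by (force simp del: bit_not_zero_iff)
  thus ?thesis by (rule finite_subset) simp
qed

lemma wt_add: "wt (p + q) \<le> wt p + wt q"
proof -
  have "psupp (p+q) \<subseteq> psupp p \<union> psupp q" by (auto simp: psupp_def)
  hence "wt (p+q) \<le> card (psupp p \<union> psupp q)"
    unfolding wt_def by (intro card_mono) auto
  also have "\<dots> \<le> wt p + wt q" unfolding wt_def by (rule card_Un_le)
  finally show ?thesis .
qed

lemma wt_0 [simp]: "wt 0 = 0" by (simp add: wt_def psupp_def)
lemma wt_1: "wt 1 = 1"
proof -
  have "psupp (1::bit poly) = {0}" by (auto simp: coeff_1 psupp_def)
  thus ?thesis by (simp add: wt_def)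
qed

lemma wt_sum: "wt (\<Sum>i\<in>A. g i) \<le> (\<Sum>i\<in>A. wt (g i))"
proof (induction A rule: infinite_finite_induct)
  case (insert x F)
  thus ?case using wt_add[of "g x" "sum g F"] by simp
qed simp_all

lemma wt_mult: "wt (p * q) \<le> wt p * wt q"
proof -
  let ?P = "psupp p" and ?Q = "psupp q"
  have "psupp (p*q) \<subseteq> (\<lambda>(i,j). i+j) ` (?P \<times> ?Q)"
  proof
    fix n assume "n \<in> psupp (p*q)"
    hence nz: "(\<Sum>i\<le>n. coeff p i * coeff q (n-i)) \<noteq> 0" by (simp add: coeff_mult psupp_def)
    have "\<exists>i\<in>{..n}. coeff p i * coeff q (n-i) \<noteq> 0"
    proof (rule ccontr)
      assume "\<not> ?thesis"
      hence "(\<Sum>i\<le>n. coeff p i * coeff q (n-i)) = 0" by (intro sum.neutral) blast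
      with nz show False by contradiction
    qed
    then obtain i where "i \<le> n" "coeff p i * coeff q (n-i) \<noteq> 0" by auto
    hence "i \<in> ?P" "n - i \<in> ?Q" "n = i + (n - i)" by (auto simp: psupp_def)
    thus "n \<in> (\<lambda>(i,j). i+j) ` (?P \<times> ?Q)"
      by (intro image_eqI[of _ _ "(i, n-i)"]) auto
  qed
  hence "wt (p*q) \<le> card ((\<lambda>(i,j). i+j) ` (?P \<times> ?Q))"
    unfolding wt_def by (intro card_mono) auto
  also have "\<dots> \<le> card (?P \<times> ?Q)" by (rule card_image_le) simp
  also have "\<dots> = wt p * wt q" by (simp add: wt_def card_cartesian_product)
  finally show ?thesis .
qed

lemma degree_fL: assumes "L > 0" shows "degree (fL L) = L"
proof -
  have "fL L = monom 1 L + (- 1)" unfolding fL_def by simp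
  also have "degree \<dots> = degree (monom (1::bit) L)"
    by (rule degree_add_eq_left) (use assms in \<open>simp add: degree_monom_eq\<close>)
  finally show ?thesis by (simp add: degree_monom_eq)
qed

lemma red_small: "L > 0 \<Longrightarrow> degree p < L \<Longrightarrow> red L p = p"
  unfolding red_def by (rule mod_poly_less) (simp add: degree_fL)

lemma red_monom:
  assumes "L > 0" shows "red L (monom c n) = monom c (n mod L)"
proof -
  define k where "k = n div L"
  have n: "n = n mod L + L * k" unfolding k_def by simp
  have "monom (1::bit) (L*k) - 1 = (monom 1 L) ^ k - 1" by (simp add: monom_power mult.commute)
  also have "\<dots> = (monom 1 L - 1) * (\<Sum>i<k. (monom 1 L) ^ i)" by (rule power_diff_1_eq)
  finally have d: "fL L dvd monom (1::bit) (L*k) - 1" unfolding fL_def by simp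
  have "monom c n - monom c (n mod L) = monom c (n mod L) * (monom 1 (L*k) - 1)"
    by (subst n) (simp add: mult_monom right_diff_distrib)
  hence "fL L dvd monom c n - monom c (n mod L)" using d by simp
  hence "monom c n mod fL L = monom c (n mod L) mod fL L" by (simp add: mod_eq_dvd_iff)
  also have "\<dots> = monom c (n mod L)"
    using red_small[OF assms, of "monom c (n mod L)"] assms unfolding red_def
    by (meson degree_monom_le le_less_trans mod_less_divisor)
  finally show ?thesis by (simp add: red_def)
qed

lemma red_add: "red L (p + q) = red L (red L p + red L q)"
  unfolding red_def by (simp add: mod_add_eq)
lemma red_mult: "red L (p * q) = red L (red L p * red L q)"
  unfolding red_def by (simp add: mod_mult_eq)
lemma red_sum: "red L (\<Sum>i\<in>A. g i) = red L (\<Sum>i\<in>A. red L (g i))"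
  unfolding red_def by (simp add: mod_sum_eq)
lemma red_red: "red L (red L p) = red L p" unfolding red_def by simp

lemma red_expand:
  assumes "L > 0"
  shows "red L p = (\<Sum>n\<le>degree p. monom (coeff p n) (n mod L))"
proof -
  have "red L p = red L (\<Sum>n\<le>degree p. monom (coeff p n) n)" by (simp add: poly_as_sum_of_monoms)
  also have "\<dots> = red L (\<Sum>n\<le>degree p. monom (coeff p n) (n mod L))"
    by (subst red_sum) (simp add: red_monom[OF assms])
  also have "\<dots> = (\<Sum>n\<le>degree p. monom (coeff p n) (n mod L))"
  proof (rule red_small[OF assms])
    have "degree (\<Sum>n\<le>degree p. monom (coeff p n) (n mod L)) \<le> L - 1"
    proof (rule degree_sum_le)
      fix n
      have "n mod L < L" using assms by simp
      thus "degree (monom (coeff p n) (n mod L)) \<le> L - 1"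
        using degree_monom_le[of "coeff p n" "n mod L"] by linarith
    qed simp
    thus "degree (\<Sum>n\<le>degree p. monom (coeff p n) (n mod L)) < L" using assms by linarith
  qed
  finally show ?thesis .
qed

lemma wt_red_le: assumes "L > 0" shows "wt (red L p) \<le> wt p"
proof -
  have "psupp (red L p) \<subseteq> (\<lambda>n. n mod L) ` psupp p"
  proof
    fix k assume "k \<in> psupp (red L p)"
    hence nz: "(\<Sum>n\<le>degree p. coeff (monom (coeff p n) (n mod L)) k) \<noteq> 0"
      by (simp add: red_expand[OF assms] coeff_sum psupp_def del: coeff_monom)
    have "\<exists>n\<in>{..degree p}. coeff (monom (coeff p n) (n mod L)) k \<noteq> 0"
    proof (rule ccontr)
      assume "\<not> ?thesis"
      hence "(\<Sum>n\<le>degree p. coeff (monom (coeff p n) (n mod L)) k) = 0" by (intro sum.neutral) blast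
      with nz show False by contradiction
    qed
    then obtain n where "coeff (monom (coeff p n) (n mod L)) k \<noteq> 0" by auto
    hence "n \<in> psupp p" "k = n mod L" by (auto simp: psupp_def split: if_splits)
    thus "k \<in> (\<lambda>n. n mod L) ` psupp p" by blast
  qed
  hence "wt (red L p) \<le> card ((\<lambda>n. n mod L) ` psupp p)"
    unfolding wt_def by (intro card_mono) auto
  also have "\<dots> \<le> wt p" unfolding wt_def by (rule card_image_le) simp
  finally show ?thesis .
qed

lemma W_add: assumes "L > 0" shows "W L (p + q) \<le> W L p + W L q"
proof -
  have "W L (p + q) = wt (red L (red L p + red L q))" unfolding W_def by (subst red_add) (rule refl)
  also have "\<dots> \<le> wt (red L p + red L q)" by (rule wt_red_le[OF assms])
  also have "\<dots> \<le> W L p + W L q" unfolding W_def by (rule wt_add)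
  finally show ?thesis .
qed

lemma W_mult: assumes "L > 0" shows "W L (p * q) \<le> W L p * W L q"
proof -
  have "W L (p * q) = wt (red L (red L p * red L q))" unfolding W_def by (subst red_mult) (rule refl)
  also have "\<dots> \<le> wt (red L p * red L q)" by (rule wt_red_le[OF assms])
  also have "\<dots> \<le> W L p * W L q" unfolding W_def by (rule wt_mult)
  finally show ?thesis .
qed

lemma W_sum: "L > 0 \<Longrightarrow> W L (\<Sum>i\<in>A. g i) \<le> (\<Sum>i\<in>A. W L (g i))"
proof (induction A rule: infinite_finite_induct)
  case (infinite A) thus ?case by (simp add: W_def red_def)
next
  case empty thus ?case by (simp add: W_def red_def)
next
  case (insert x F)
  thus ?case using W_add[of L "g x" "sum g F"] by simp
qed

lemma W_prod: "L > 0 \<Longrightarrow> W L (\<Prod>i\<in>A. g i) \<le> (\<Prod>i\<in>A. W L (g i))"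
proof (induction A rule: infinite_finite_induct)
  case (infinite A) thus ?case using wt_red_le[of L 1] by (simp add: W_def wt_1)
next
  case empty thus ?case using wt_red_le[of L 1] by (simp add: W_def wt_1)
next
  case (insert x F)
  hence "W L (\<Prod>i\<in>insert x F. g i) \<le> W L (g x) * W L (\<Prod>i\<in>F. g i)"
    using W_mult[of L "g x"] by simp
  also have "\<dots> \<le> W L (g x) * (\<Prod>i\<in>F. W L (g i))" using insert by simp
  finally show ?case using insert by simp
qed

lemma W_pm:
  assumes "L > 0" "\<And>x v. x \<in> T \<Longrightarrow> v \<in> V \<Longrightarrow> W L (M x v) \<le> A x v"
  shows "W L (pm M T V) \<le> pm A T V"
proof -
  have "W L (pm M T V) \<le> (\<Sum>f\<in>Bij T V. W L (\<Prod>x\<in>T. M x (f x)))"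
    unfolding pm_def by (rule W_sum[OF assms(1)])
  also have "\<dots> \<le> (\<Sum>f\<in>Bij T V. \<Prod>x\<in>T. A x (f x))"
  proof (rule sum_mono)
    fix f assume f: "f \<in> Bij T V"
    have "W L (\<Prod>x\<in>T. M x (f x)) \<le> (\<Prod>x\<in>T. W L (M x (f x)))" by (rule W_prod[OF assms(1)])
    also have "\<dots> \<le> (\<Prod>x\<in>T. A x (f x))"
    proof (rule prod_mono)
      fix x assume x: "x \<in> T"
      have "bij_betw f T V" using f by (simp add: Bij_def)
      hence "f x \<in> V" using x bij_betwE by blast
      thus "0 \<le> W L (M x (f x)) \<and> W L (M x (f x)) \<le> A x (f x)" using assms(2)[OF x] by simp
    qed
    finally show "W L (\<Prod>x\<in>T. M x (f x)) \<le> (\<Prod>x\<in>T. A x (f x))" .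
  qed
  finally show ?thesis by (simp add: pm_def)
qed


declare mult_bit_eq_and [simp del] add_bit_eq_xor [simp del]

lemma poly_sum_lt: "degree p < L \<Longrightarrow> p = (\<Sum>a<L. monom (coeff p a) a)"
proof (rule poly_eqI)
  fix n assume d: "degree p < L"
  have "coeff (\<Sum>a<L. monom (coeff p a) a) n = (\<Sum>a<L. if a = n then coeff p a else 0)"
    by (simp add: coeff_sum)
  also have "\<dots> = (if n < L then coeff p n else 0)" by (simp add: sum.delta')
  also have "\<dots> = coeff p n" using d coeff_eq_0[of p n] by auto
  finally show "coeff p n = coeff (\<Sum>a<L. monom (coeff p a) a) n" by simp
qed

lemma deg_sum_monom_lt:
  assumes "L > 0" "\<And>z. z \<in> A \<Longrightarrow> e z < L"
  shows "degree (\<Sum>z\<in>A. monom (c z) (e z) :: bit poly) < L"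
proof -
  have "degree (\<Sum>z\<in>A. monom (c z) (e z) :: bit poly) \<le> L - 1"
  proof (cases "finite A")
    case True thus ?thesis
    proof (rule degree_sum_le)
      fix z assume "z \<in> A"
      hence "e z < L" by (rule assms(2))
      thus "degree (monom (c z) (e z) :: bit poly) \<le> L - 1"
        using degree_monom_le[of "c z" "e z"] by linarith
    qed
  qed simp
  thus ?thesis using assms by linarith
qed

lemma red_sum_monom:
  assumes "L > 0"
  shows "red L (\<Sum>z\<in>A. monom (c z) (e z)) = (\<Sum>z\<in>A. monom (c z) (e z mod L))"
proof -
  have "red L (\<Sum>z\<in>A. monom (c z) (e z)) = red L (\<Sum>z\<in>A. monom (c z) (e z mod L))"
    by (subst red_sum) (simp add: red_monom[OF assms])
  also have "\<dots> = (\<Sum>z\<in>A. monom (c z) (e z mod L))"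
    by (rule red_small[OF assms], rule deg_sum_monom_lt) (use assms in auto)
  finally show ?thesis .
qed

lemma mod_match:
  fixes a i j L :: nat
  assumes "a < L" "j < L" "i < L"
  shows "(a + j) mod L = i \<longleftrightarrow> a = (i + L - j) mod L"
proof (cases "j \<le> i")
  case True
  hence e: "(i + L - j) mod L = i - j"
    by (metis Nat.add_diff_assoc2 add.commute assms(3) diff_le_self le_less_trans mod_add_self2 mod_less)
  show ?thesis
  proof (cases "a + j < L")
    case True thus ?thesis using e \<open>j \<le> i\<close> by auto
  next
    case False
    hence "(a + j) mod L = a + j - L" using assms by (simp add: mod_if)
    thus ?thesis using e \<open>j \<le> i\<close> assms False by auto
  qed
next
  case False
  hence e: "(i + L - j) mod L = i + L - j" using assms by simp
  show ?thesis
  proof (cases "a + j < L")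
    case True thus ?thesis using e False by auto
  next
    case F2: False
    hence "(a + j) mod L = a + j - L" using assms by (simp add: mod_if)
    thus ?thesis using e False assms F2 by auto
  qed
qed

lemma mod_flip:
  fixes i j L :: nat
  assumes "j < L" "i < L"
  shows "(L - (i + L - j) mod L) mod L = (j + L - i) mod L"
proof (cases "j \<le> i")
  case True
  hence e: "(i + L - j) mod L = i - j"
    by (metis Nat.add_diff_assoc2 add.commute assms(2) diff_le_self le_less_trans mod_add_self2 mod_less)
  show ?thesis
  proof (cases "i = j")
    case True thus ?thesis using e by simp
  next
    case False thus ?thesis using e \<open>j \<le> i\<close> assms by simp
  qed
next
  case False
  hence e: "(i + L - j) mod L = i + L - j" using assms by simp
  have "(j + L - i) mod L = j - i" using False assms
    by (metis Nat.add_diff_assoc2 add.commute less_imp_le_nat mod_add_self2 mod_less less_imp_diff_less not_le)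
  thus ?thesis using e False assms by simp
qed

lemma red_prod_coeff:
  assumes L: "L > 0" and dh: "degree h < L" and dv: "degree v < L" and i: "i < L"
  shows "coeff (red L (h * v)) i = (\<Sum>j<L. coeff v j * coeff h ((i + L - j) mod L))"
proof -
  let ?P = "{..<L} \<times> {..<L}"
  have "h * v = (\<Sum>a<L. monom (coeff h a) a) * (\<Sum>j<L. monom (coeff v j) j)"
    using poly_sum_lt[OF dh] poly_sum_lt[OF dv] by simp
  also have "\<dots> = (\<Sum>z\<in>?P. monom (coeff h (fst z) * coeff v (snd z)) (fst z + snd z))"
    by (simp add: sum_product sum.cartesian_product mult_monom case_prod_beta)
  finally have "red L (h * v) = (\<Sum>z\<in>?P. monom (coeff h (fst z) * coeff v (snd z)) ((fst z + snd z) mod L))"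
    using red_sum_monom[OF L] by simp
  hence "coeff (red L (h * v)) i = (\<Sum>z\<in>?P. if (fst z + snd z) mod L = i then coeff h (fst z) * coeff v (snd z) else 0)"
    by (simp add: coeff_sum)
  also have "\<dots> = (\<Sum>a<L. \<Sum>j<L. if (a + j) mod L = i then coeff h a * coeff v j else 0)"
    by (simp add: sum.cartesian_product case_prod_beta)
  also have "\<dots> = (\<Sum>j<L. \<Sum>a<L. if a = (i + L - j) mod L then coeff h a * coeff v j else 0)"
    by (subst sum.swap) (intro sum.cong refl, simp add: mod_match[OF _ _ i])
  also have "\<dots> = (\<Sum>j<L. coeff v j * coeff h ((i + L - j) mod L))"
    using L by (simp add: sum.delta' mult.commute)
  finally show ?thesis .
qed


declare mult_bit_eq_and [simp del] add_bit_eq_xor [simp del]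

definition hp :: "nat \<Rightarrow> (nat \<Rightarrow> nat \<Rightarrow> bool) \<Rightarrow> nat \<Rightarrow> nat \<Rightarrow> bit poly" where
  "hp L B x y = (\<Sum>k<L. monom (of_bool (B (x*L) (y*L + (L - k) mod L))) k)"

definition cw :: "nat \<Rightarrow> nat set \<Rightarrow> (nat \<Rightarrow> bit poly) \<Rightarrow> nat set" where
  "cw L V v = (\<lambda>(y,k). y*L+k) ` (SIGMA y:V. {k. k < L \<and> coeff (v y) k \<noteq> 0})"

lemma coeff_hp: "coeff (hp L B x y) a = (if a < L then of_bool (B (x*L) (y*L + (L-a) mod L)) else 0)"
  unfolding hp_def by (simp add: coeff_sum sum.delta' del: of_bool_eq)

lemma degree_hp: "L > 0 \<Longrightarrow> degree (hp L B x y) < L"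
  unfolding hp_def by (rule deg_sum_monom_lt) auto

lemma fL_nz: "L > 0 \<Longrightarrow> fL L \<noteq> 0"
  using degree_fL[of L] by auto

lemma degree_red_lt: assumes "L > 0" shows "degree (red L p) < L"
proof -
  have "p mod fL L = 0 \<or> degree (p mod fL L) < degree (fL L)"
    by (rule degree_mod_less) (rule fL_nz[OF assms])
  thus ?thesis using assms degree_fL[OF assms] by (auto simp: red_def)
qed

lemma red_sum_small: assumes "L > 0" shows "red L (\<Sum>i\<in>A. g i) = (\<Sum>i\<in>A. red L (g i))"
proof -
  have "red L (\<Sum>i\<in>A. g i) = red L (\<Sum>i\<in>A. red L (g i))" by (rule red_sum)
  also have "\<dots> = (\<Sum>i\<in>A. red L (g i))"
  proof (rule red_small[OF assms])
    show "degree (\<Sum>i\<in>A. red L (g i)) < L"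
    proof (cases "finite A")
      case True
      have "degree (\<Sum>i\<in>A. red L (g i)) \<le> L - 1"
        using True
      proof (rule degree_sum_le)
        fix i show "degree (red L (g i)) \<le> L - 1" using degree_red_lt[OF assms, of "g i"] by linarith
      qed
      thus ?thesis using assms by linarith
    qed (use assms in simp)
  qed
  finally show ?thesis .
qed

lemma flip_inv: "(a::nat) < L \<Longrightarrow> (L - (L - a) mod L) mod L = a"
  by (cases "a = 0") auto

lemma W_hp: assumes "L > 0" shows "W L (hp L B x y) = weight_matrix L B x y"
proof -
  let ?f = "\<lambda>a. (L - a) mod L"
  have "W L (hp L B x y) = wt (hp L B x y)" unfolding W_def using red_small[OF assms degree_hp[OF assms]] by simp
  also have "psupp (hp L B x y) = {a. a < L \<and> B (x*L) (y*L + ?f a)}"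
    by (auto simp: psupp_def coeff_hp)
  hence "wt (hp L B x y) = card {a. a < L \<and> B (x*L) (y*L + ?f a)}" by (simp add: wt_def)
  also have "\<dots> = card (?f ` {a. a < L \<and> B (x*L) (y*L + ?f a)})"
  proof (rule card_image[symmetric], rule inj_onI)
    fix a b assume "a \<in> {a. a < L \<and> B (x*L) (y*L + ?f a)}" "b \<in> {a. a < L \<and> B (x*L) (y*L + ?f a)}" and eq: "?f a = ?f b"
    hence "a < L" "b < L" by auto
    have "a = ?f (?f a)" using flip_inv[OF \<open>a < L\<close>] by simp
    also have "\<dots> = ?f (?f b)" using eq by simp
    also have "\<dots> = b" using flip_inv[OF \<open>b < L\<close>] by simp
    finally show "a = b" .
  qed
  also have "?f ` {a. a < L \<and> B (x*L) (y*L + ?f a)} = {j. j < L \<and> B (x*L) (y*L + j)}"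
  proof (intro equalityI subsetI)
    fix j assume "j \<in> ?f ` {a. a < L \<and> B (x*L) (y*L + ?f a)}"
    thus "j \<in> {j. j < L \<and> B (x*L) (y*L + j)}" using assms by auto
  next
    fix j assume j: "j \<in> {j. j < L \<and> B (x*L) (y*L + j)}"
    have "?f j < L" using assms by simp
    moreover have "?f (?f j) = j" using j flip_inv[of j L] by simp
    ultimately show "j \<in> ?f ` {a. a < L \<and> B (x*L) (y*L + ?f a)}" using j
      by (intro image_eqI[of _ _ "?f j"]) simp_all
  qed
  finally show ?thesis by (simp add: weight_matrix_def)
qed

lemma inj_blk: "(L::nat) > 0 \<Longrightarrow> inj_on (\<lambda>(y,k). y*L+k) (SIGMA y:V. {k. k < L \<and> P y k})"
proof (rule inj_onI, clarify)
  fix y k y' k' :: nat assume L: "L > 0" and "k < L" "k' < L" "y*L+k = y'*L+k'"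
  moreover have "(y*L+k) div L = y" "(y*L+k) mod L = k" "(y'*L+k') div L = y'" "(y'*L+k') mod L = k'"
    using L \<open>k < L\<close> \<open>k' < L\<close> by simp_all
  ultimately show "y = y' \<and> k = k'" by metis
qed

lemma card_cw:
  assumes "L > 0" "finite V" "\<And>y. y \<in> V \<Longrightarrow> degree (v y) < L"
  shows "card (cw L V v) = (\<Sum>y\<in>V. wt (v y))"
proof -
  have "card (cw L V v) = card (SIGMA y:V. {k. k < L \<and> coeff (v y) k \<noteq> 0})"
    unfolding cw_def by (rule card_image) (rule inj_blk[OF assms(1)])
  also have "\<dots> = (\<Sum>y\<in>V. card {k. k < L \<and> coeff (v y) k \<noteq> 0})"
    using assms(2) by (subst card_SigmaI) auto
  also have "\<dots> = (\<Sum>y\<in>V. wt (v y))"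
  proof (rule sum.cong[OF refl])
    fix y assume "y \<in> V"
    hence "{k. k < L \<and> coeff (v y) k \<noteq> 0} = psupp (v y)"
      using assms(3)[of y] le_degree[of "v y"] unfolding psupp_def by (force simp del: bit_not_zero_iff)
    thus "card {k. k < L \<and> coeff (v y) k \<noteq> 0} = wt (v y)" by (simp add: wt_def)
  qed
  finally show ?thesis .
qed

lemma cw_sub: "V \<subseteq> {..<n} \<Longrightarrow> cw L V v \<subseteq> {..<n*L}"
proof
  fix z assume V: "V \<subseteq> {..<n}" and "z \<in> cw L V v"
  then obtain y k where "y \<in> V" "k < L" "z = y*L+k" unfolding cw_def by auto
  hence "y + 1 \<le> n" using V by auto
  hence "(y+1)*L \<le> n*L" by (rule mult_right_mono) simp
  thus "z \<in> {..<n*L}" using \<open>z = y*L+k\<close> \<open>k < L\<close> by simp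
qed

lemma bit_mult_of_bool: "(c::bit) * of_bool P = of_bool (c \<noteq> 0 \<and> P)"
  by (cases P) (auto simp del: bit_not_zero_iff, metis bit_not_zero_iff)

lemma parity:
  assumes L: "L > 0" and bc: "block_circulant m n L B" and x: "x < m" and i: "i < L"
    and V: "V \<subseteq> {..<n}" "finite V" and dv: "\<And>y. y \<in> V \<Longrightarrow> degree (v y) < L"
    and z: "red L (\<Sum>y\<in>V. hp L B x y * v y) = 0"
  shows "even (card {jj \<in> cw L V v. B (x*L+i) jj})"
proof -
  define P where "P y j \<longleftrightarrow> coeff (v y) j \<noteq> 0 \<and> B (x*L+i) (y*L+j)" for y j
  have "0 = coeff (red L (\<Sum>y\<in>V. hp L B x y * v y)) i" using z by simp
  also have "\<dots> = (\<Sum>y\<in>V. coeff (red L (hp L B x y * v y)) i)"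
    by (simp add: red_sum_small[OF L] coeff_sum)
  also have "\<dots> = (\<Sum>y\<in>V. \<Sum>j<L. coeff (v y) j * coeff (hp L B x y) ((i + L - j) mod L))"
    by (intro sum.cong refl red_prod_coeff L degree_hp dv i)
  also have "\<dots> = (\<Sum>y\<in>V. \<Sum>j<L. of_bool (P y j))"
  proof (intro sum.cong refl)
    fix y j assume y: "y \<in> V" and j: "j \<in> {..<L}"
    have "coeff (hp L B x y) ((i + L - j) mod L) = of_bool (B (x*L) (y*L + (L - (i + L - j) mod L) mod L))"
      using L by (simp add: coeff_hp)
    also have "(L - (i + L - j) mod L) mod L = (j + L - i) mod L" using j i by (intro mod_flip) auto
    also have "B (x*L) (y*L + (j + L - i) mod L) = B (x*L+i) (y*L+j)"
      using bc x y V j i unfolding block_circulant_def by auto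
    finally show "coeff (v y) j * coeff (hp L B x y) ((i + L - j) mod L) = of_bool (P y j)"
      by (simp add: bit_mult_of_bool P_def)
  qed
  also have "\<dots> = (\<Sum>y\<in>V. of_nat (card {j. j < L \<and> P y j}))"
    by (intro sum.cong refl) (simp add: Int_def)
  also have "\<dots> = of_nat (\<Sum>y\<in>V. card {j. j < L \<and> P y j})" by simp
  also have "(\<Sum>y\<in>V. card {j. j < L \<and> P y j}) = card (SIGMA y:V. {j. j < L \<and> P y j})"
    using V by (subst card_SigmaI) auto
  also have "\<dots> = card ((\<lambda>(y,k). y*L+k) ` (SIGMA y:V. {j. j < L \<and> P y j}))"
    by (rule card_image[symmetric]) (rule inj_blk[OF L])
  also have "(\<lambda>(y,k). y*L+k) ` (SIGMA y:V. {j. j < L \<and> P y j}) = {jj \<in> cw L V v. B (x*L+i) jj}"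
    unfolding cw_def P_def by auto
  finally have "(of_nat (card {jj \<in> cw L V v. B (x*L+i) jj}) :: bit) = 0" by simp
  hence "even (of_nat (card {jj \<in> cw L V v. B (x*L+i) jj}) :: bit)" by (metis even_zero)
  thus ?thesis by (simp only: even_of_nat_iff)
qed


declare mult_bit_eq_and [simp del] add_bit_eq_xor [simp del]

lemma perm_cols_pm:
  fixes A :: "nat \<Rightarrow> nat \<Rightarrow> nat"
  assumes fin: "finite S'" and card: "card S' = m"
  shows "perm_cols A m S' = pm A {..<m} S'"
proof -
  define s where "s = sorted_list_of_set S'"
  have ds: "distinct s" and ss: "set s = S'" and ls: "length s = m"
    using fin card by (auto simp: s_def)
  have nb: "bij_betw ((!) s) {..<m} S'" by (rule bij_betw_nth) (use ds ss ls in auto)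
  define ix where "ix = inv_into {..<m} ((!) s)"
  have ixb: "bij_betw ix S' {..<m}" unfolding ix_def by (rule bij_betw_inv_into[OF nb])
  have "perm_cols A m S' = (\<Sum>\<sigma>\<in>{\<sigma>. \<sigma> permutes {..<m}}. \<Prod>x<m. A x (s ! (inv \<sigma> x)))"
    unfolding perm_cols_def s_def[symmetric]
  proof (rule sum.cong[OF refl])
    fix \<sigma> assume "\<sigma> \<in> {\<sigma>. \<sigma> permutes {..<m}}"
    hence p: "\<sigma> permutes {..<m}" by simp
    have "(\<Prod>x<m. A x (s ! (inv \<sigma> x))) = (\<Prod>k<m. A (\<sigma> k) (s ! (inv \<sigma> (\<sigma> k))))"
      using prod.permute[OF p, of "\<lambda>x. A x (s ! (inv \<sigma> x))"] by (simp add: comp_def)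
    also have "\<dots> = (\<Prod>k<m. A (\<sigma> k) (s ! k))" by (simp add: permutes_inverses[OF p])
    finally show "(\<Prod>k<m. A (\<sigma> k) (s ! k)) = (\<Prod>x<m. A x (s ! (inv \<sigma> x)))" by simp
  qed
  also have "\<dots> = (\<Sum>\<tau>\<in>{\<tau>. \<tau> permutes {..<m}}. \<Prod>x<m. A x (s ! (\<tau> x)))"
  proof -
    have "(\<Sum>\<tau>\<in>{\<tau>. \<tau> permutes {..<m}}. \<Prod>x<m. A x (s ! (\<tau> x)))
        = (\<Sum>\<sigma>\<in>{\<sigma>. \<sigma> permutes {..<m}}. \<Prod>x<m. A x (s ! (inv \<sigma> x)))"
      by (rule sum_permutations_inverse)
    thus ?thesis by simp
  qed
  also have "\<dots> = (\<Sum>f\<in>Bij {..<m} S'. \<Prod>x<m. A x (f x))"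
  proof (rule sum.reindex_bij_witness[where j = "\<lambda>\<tau>. restrict (\<lambda>x. s ! (\<tau> x)) {..<m}"
        and i = "\<lambda>f x. if x < m then ix (f x) else x"])
    fix \<tau> assume "\<tau> \<in> {\<tau>. \<tau> permutes {..<m}}"
    hence p: "\<tau> permutes {..<m}" by simp
    show "(\<lambda>x. if x < m then ix (restrict (\<lambda>x. s ! (\<tau> x)) {..<m} x) else x) = \<tau>"
    proof
      fix x show "(if x < m then ix (restrict (\<lambda>x. s ! (\<tau> x)) {..<m} x) else x) = \<tau> x"
      proof (cases "x < m")
        case True
        hence "\<tau> x \<in> {..<m}" using permutes_in_image[OF p] by simp
        moreover have "inj_on ((!) s) {..<m}" using nb by (simp add: bij_betw_def)
        ultimately show ?thesis using True by (simp add: ix_def inv_into_f_f)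
      next
        case False thus ?thesis using permutes_not_in[OF p, of x] by simp
      qed
    qed
    have "bij_betw (\<lambda>x. s ! (\<tau> x)) {..<m} S'"
      using bij_betw_trans[OF permutes_imp_bij[OF p] nb] by (simp add: comp_def)
    hence "bij_betw (restrict (\<lambda>x. s ! (\<tau> x)) {..<m}) {..<m} S'"
      by (subst bij_betw_cong[where g = "\<lambda>x. s ! (\<tau> x)"]) auto
    thus "restrict (\<lambda>x. s ! (\<tau> x)) {..<m} \<in> Bij {..<m} S'" by (simp add: Bij_def)
    show "(\<Prod>x<m. A x (restrict (\<lambda>x. s ! (\<tau> x)) {..<m} x)) = (\<Prod>x<m. A x (s ! (\<tau> x)))"
      by (rule prod.cong) auto
  next
    fix f assume "f \<in> Bij {..<m} S'"
    hence fb: "bij_betw f {..<m} S'" and fe: "f \<in> extensional {..<m}" by (auto simp: Bij_def)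
    show "restrict (\<lambda>x. s ! (if x < m then ix (f x) else x)) {..<m} = f"
    proof
      fix x show "restrict (\<lambda>x. s ! (if x < m then ix (f x) else x)) {..<m} x = f x"
      proof (cases "x < m")
        case True
        hence "f x \<in> S'" using fb bij_betwE by blast
        hence "f x \<in> (!) s ` {..<m}" using nb by (simp add: bij_betw_def)
        thus ?thesis using True by (simp add: ix_def f_inv_into_f)
      next
        case False thus ?thesis using fe by (simp add: extensional_def)
      qed
    qed
    have "bij_betw (ix \<circ> f) {..<m} {..<m}" by (rule bij_betw_trans[OF fb ixb])
    hence "bij_betw (\<lambda>x. if x < m then ix (f x) else x) {..<m} {..<m}"
      by (subst bij_betw_cong[where g = "ix \<circ> f"]) auto
    hence "(\<lambda>x. if x < m then ix (f x) else x) permutes {..<m}"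
      by (rule bij_imp_permutes) simp
    thus "(\<lambda>x. if x < m then ix (f x) else x) \<in> {\<tau>. \<tau> permutes {..<m}}" by simp
  qed
  also have "\<dots> = pm A {..<m} S'" by (simp add: pm_def)
  finally show ?thesis .
qed

lemma psi_pm:
  fixes A :: "nat \<Rightarrow> nat \<Rightarrow> nat"
  assumes fin: "finite S" and card: "card S = m + 1"
  shows "psi A m S = (\<Sum>u\<in>S. pm A {..<m} (S - {u}))"
proof -
  have img: "{S'. S' \<subseteq> S \<and> card S' = m} = (\<lambda>u. S - {u}) ` S"
  proof (intro equalityI subsetI)
    fix S' assume "S' \<in> {S'. S' \<subseteq> S \<and> card S' = m}"
    hence sub: "S' \<subseteq> S" and c: "card S' = m" by auto
    have "card (S - S') = 1" using card c sub fin by (simp add: card_Diff_subset finite_subset)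
    then obtain u where u: "S - S' = {u}" by (rule card_1_singletonE)
    hence "S' = S - {u}" "u \<in> S" using sub by auto
    thus "S' \<in> (\<lambda>u. S - {u}) ` S" by blast
  next
    fix S' assume "S' \<in> (\<lambda>u. S - {u}) ` S"
    then obtain u where "u \<in> S" "S' = S - {u}" by auto
    thus "S' \<in> {S'. S' \<subseteq> S \<and> card S' = m}" using card fin by auto
  qed
  have inj: "inj_on (\<lambda>u. S - {u}) S" by (rule inj_onI) auto
  have "psi A m S = (\<Sum>S'\<in>(\<lambda>u. S - {u}) ` S. perm_cols A m S')" by (simp add: psi_def img)
  also have "\<dots> = (\<Sum>u\<in>S. perm_cols A m (S - {u}))" by (rule sum.reindex[OF inj, unfolded comp_def])
  also have "\<dots> = (\<Sum>u\<in>S. pm A {..<m} (S - {u}))"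
    by (rule sum.cong[OF refl], rule perm_cols_pm) (use fin card in auto)
  finally show ?thesis .
qed


declare mult_bit_eq_and [simp del] add_bit_eq_xor [simp del]

definition good :: "nat \<Rightarrow> (nat \<Rightarrow> nat \<Rightarrow> bit poly) \<Rightarrow> (nat \<Rightarrow> nat \<Rightarrow> nat) \<Rightarrow> nat set \<Rightarrow> nat set
   \<Rightarrow> nat set \<Rightarrow> nat set \<Rightarrow> nat \<Rightarrow> (nat \<Rightarrow> nat) \<Rightarrow> bool" where
  "good L M A X S T U j \<nu> \<longleftrightarrow> T \<subseteq> X \<and> U \<subseteq> S \<and> j \<in> S \<and> j \<notin> U \<and> card T = card U \<and>
     red L (pm M T U) \<noteq> 0 \<and> bij_betw \<nu> (X - T) (S - insert j U) \<and> (\<forall>r\<in>X-T. A r (\<nu> r) \<ge> 1)"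

lemma greedy:
  assumes "finite X" "finite S" "good L M A X S T U j \<nu>"
  shows "\<exists>T U j \<nu>. good L M A X S T U j \<nu> \<and> (\<forall>r\<in>X-T. red L (pm M (insert r T) (insert j U)) = 0)"
  using assms(3)
proof (induction "card (X - T)" arbitrary: T U j \<nu> rule: less_induct)
  case less
  show ?case
  proof (cases "\<forall>r\<in>X-T. red L (pm M (insert r T) (insert j U)) = 0")
    case True thus ?thesis using less.prems by blast
  next
    case False
    then obtain r where r: "r \<in> X - T" and nz: "red L (pm M (insert r T) (insert j U)) \<noteq> 0" by blast
    have g: "T \<subseteq> X" "U \<subseteq> S" "j \<in> S" "j \<notin> U" "card T = card U"
      "bij_betw \<nu> (X - T) (S - insert j U)" "\<forall>r\<in>X-T. A r (\<nu> r) \<ge> 1"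
      using less.prems by (auto simp: good_def)
    have fT: "finite T" "finite U" using g assms finite_subset by auto
    have nr: "\<nu> r \<in> S - insert j U" using g(6) r bij_betwE by blast
    have "good L M A X S (insert r T) (insert j U) (\<nu> r) \<nu>"
      unfolding good_def
    proof (intro conjI)
      show "insert r T \<subseteq> X" using g r by auto
      show "insert j U \<subseteq> S" using g by auto
      show "\<nu> r \<in> S" "\<nu> r \<notin> insert j U" using nr by auto
      show "card (insert r T) = card (insert j U)" using g fT r by simp
      show "red L (pm M (insert r T) (insert j U)) \<noteq> 0" by fact
      have "bij_betw \<nu> ((X - T) - {r}) ((S - insert j U) - {\<nu> r})"
        by (rule bij_betw_DiffI[OF g(6)]) (use r nr in auto)
      moreover have "(X - T) - {r} = X - insert r T" "(S - insert j U) - {\<nu> r} = S - insert (\<nu> r) (insert j U)"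
        by auto
      ultimately show "bij_betw \<nu> (X - insert r T) (S - insert (\<nu> r) (insert j U))" by simp
      show "\<forall>ra\<in>X - insert r T. 1 \<le> A ra (\<nu> ra)" using g by auto
    qed
    moreover have "card (X - insert r T) < card (X - T)"
      using r assms(1) by (intro psubset_card_mono) auto
    ultimately show ?thesis using less.hyps by blast
  qed
qed

lemma bitpoly_add_self: "(p::bit poly) + p = 0"
proof (rule poly_eqI)
  fix n
  have *: "\<And>b::bit. b + b = 0" by (metis add_bit_eq_xor xor_self_eq)
  have "coeff (p + p) n = coeff p n + coeff p n" by (rule coeff_add)
  also have "\<dots> = 0" by (rule *)
  finally show "coeff (p + p) n = coeff 0 n" by simp
qed

lemma red_lin: "red L (\<Sum>u\<in>V. a u * red L (b u)) = red L (\<Sum>u\<in>V. a u * b u)"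
proof -
  have "red L (\<Sum>u\<in>V. a u * red L (b u)) = red L (\<Sum>u\<in>V. red L (a u * red L (b u)))" by (rule red_sum)
  also have "(\<lambda>u. red L (a u * red L (b u))) = (\<lambda>u. red L (a u * b u))"
    by (simp add: red_def mod_mult_right_eq)
  also have "red L (\<Sum>u\<in>V. red L (a u * b u)) = red L (\<Sum>u\<in>V. a u * b u)" by (rule red_sum[symmetric])
  finally show ?thesis .
qed

lemma pm_empty: "pm M {} {} = 1"
proof -
  have B: "Bij {} {} = {\<lambda>x. undefined}" by (auto simp: Bij_def extensional_def bij_betw_def)
  show ?thesis unfolding pm_def B by simp
qed

lemma main_vec:
  fixes M :: "nat \<Rightarrow> nat \<Rightarrow> bit poly" and A :: "nat \<Rightarrow> nat \<Rightarrow> nat"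
  assumes L: "L > 0" and fin: "finite S" and card: "card S = m + 1"
    and WA: "\<And>x y. W L (M x y) \<le> A x y"
    and S': "S' \<subseteq> S" "card S' = m" and f: "f \<in> Bij {..<m} S'" and fA: "\<forall>x<m. A x (f x) \<ge> 1"
  shows "\<exists>V w. V \<subseteq> S \<and> (\<forall>x<m. red L (\<Sum>u\<in>V. M x u * w u) = 0) \<and> (\<exists>u\<in>V. w u \<noteq> 0)
     \<and> (\<forall>u. degree (w u) < L) \<and> (\<Sum>u\<in>V. wt (w u)) \<le> (\<Sum>u\<in>S. pm A {..<m} (S - {u}))"
proof -
  let ?X = "{..<m}"
  have "card (S - S') = 1" using card S' fin by (simp add: card_Diff_subset finite_subset)
  then obtain j0 where j0: "S - S' = {j0}" by (rule card_1_singletonE)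
  have "good L M A ?X S {} {} j0 f"
    unfolding good_def
  proof (intro conjI)
    show "j0 \<in> S" "j0 \<notin> {}" using j0 by auto
    have "red L 1 = 1" using red_small[OF L, of 1] L by simp
    thus "red L (pm M {} {}) \<noteq> 0" by (simp add: pm_empty)
    have "S - insert j0 {} = S'" using j0 S' by auto
    thus "bij_betw f (?X - {}) (S - insert j0 {})" using f by (simp add: Bij_def)
    show "\<forall>r\<in>?X - {}. 1 \<le> A r (f r)" using fA by auto
  qed auto
  then obtain T U j \<nu> where g: "good L M A ?X S T U j \<nu>"
    and mx: "\<forall>r\<in>?X-T. red L (pm M (insert r T) (insert j U)) = 0"
    using greedy[of ?X S] fin by blast
  have gT: "T \<subseteq> ?X" "U \<subseteq> S" "j \<in> S" "j \<notin> U" "red L (pm M T U) \<noteq> 0"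
      "bij_betw \<nu> (?X - T) (S - insert j U)" "\<forall>r\<in>?X-T. A r (\<nu> r) \<ge> 1"
    using g by (auto simp: good_def)
  have fT: "finite T" "finite U" using finite_subset[OF gT(1)] finite_subset[OF gT(2) fin] by auto
  define V where "V = insert j U"
  define w where "w u = red L (pm M T (V - {u}))" for u
  have VS: "V \<subseteq> S" using gT by (auto simp: V_def)
  have fV: "finite V" using fT by (simp add: V_def)
  have ker: "\<forall>x<m. red L (\<Sum>u\<in>V. M x u * w u) = 0"
  proof (intro allI impI)
    fix x assume x: "x < m"
    have "red L (\<Sum>u\<in>V. M x u * w u) = red L (\<Sum>u\<in>V. M x u * pm M T (V - {u}))"
      unfolding w_def by (rule red_lin)
    also have "\<dots> = 0"
    proof (cases "x \<in> T")
      case True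
      have "(\<Sum>u\<in>V. M x u * pm M T (V - {u})) = 0"
        by (rule pm_repeated_row[OF fT(1) fV True bitpoly_add_self])
      thus ?thesis by (simp add: red_def)
    next
      case False
      have "pm M (insert x T) V = (\<Sum>u\<in>V. M x u * pm M (insert x T - {x}) (V - {u}))"
        by (rule pm_laplace) (use fT fV in auto)
      also have "insert x T - {x} = T" using False by simp
      finally have "(\<Sum>u\<in>V. M x u * pm M T (V - {u})) = pm M (insert x T) V" by simp
      thus ?thesis using mx x False by (simp add: V_def)
    qed
    finally show "red L (\<Sum>u\<in>V. M x u * w u) = 0" .
  qed
  have nz: "w j \<noteq> 0"
  proof -
    have "V - {j} = U" using gT by (auto simp: V_def)
    thus ?thesis using gT by (simp add: w_def)
  qed
  have deg: "\<forall>u. degree (w u) < L" unfolding w_def using degree_red_lt[OF L] by blast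
  have wtb: "(\<Sum>u\<in>V. wt (w u)) \<le> (\<Sum>u\<in>S. pm A ?X (S - {u}))"
  proof -
    have "(\<Sum>u\<in>V. wt (w u)) = (\<Sum>u\<in>V. W L (pm M T (V - {u})))" by (simp add: w_def W_def)
    also have "\<dots> \<le> (\<Sum>u\<in>V. pm A T (V - {u}))"
      by (rule sum_mono, rule W_pm[OF L]) (use WA in auto)
    also have "\<dots> \<le> (\<Sum>u\<in>V. pm A ?X (S - {u}))"
    proof (rule sum_mono)
      fix u assume u: "u \<in> V"
      have img: "\<nu> ` (?X - T) = S - V" using gT(6) by (simp add: bij_betw_def V_def)
      have "pm A T (V - {u}) \<le> pm A (T \<union> (?X - T)) ((V - {u}) \<union> \<nu> ` (?X - T))"
      proof (rule pm_extend_le)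
        show "finite (?X - T)" by simp
        show "finite T" "finite (V - {u})" using fT fV by auto
        show "T \<inter> (?X - T) = {}" by auto
        show "(V - {u}) \<inter> \<nu> ` (?X - T) = {}" using img by auto
        show "inj_on \<nu> (?X - T)" using gT(6) by (simp add: bij_betw_def)
        show "\<forall>r\<in>?X - T. 1 \<le> A r (\<nu> r)" using gT(7) by blast
      qed
      also have "T \<union> (?X - T) = ?X" using gT(1) by auto
      also have "(V - {u}) \<union> \<nu> ` (?X - T) = S - {u}" using img VS u by auto
      finally show "pm A T (V - {u}) \<le> pm A ?X (S - {u})" .
    qed
    also have "\<dots> \<le> (\<Sum>u\<in>S. pm A ?X (S - {u}))"
      by (rule sum_mono2[OF fin VS]) simp
    finally show ?thesis .
  qed
  show ?thesis
    using VS ker nz deg wtb by (intro exI[of _ V] exI[of _ w]) (auto simp: V_def)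
qed


declare mult_bit_eq_and [simp del] add_bit_eq_xor [simp del]

theorem theorem3:
  fixes s lam rho L :: nat
    and H :: "nat \<Rightarrow> nat \<Rightarrow> bool"
    and p q :: "nat \<Rightarrow> nat"
  assumes "s > 0" "lam > 0" "rho > 0" "L > 0"
    and "p permutes {..<s*lam*L}"
    and "q permutes {..<s*rho*L}"
    and "block_circulant (s*lam) (s*rho) L (\<lambda>i j. H (p i) (q j))"
  shows "dmin (code (s*lam*L) (s*rho*L) H)
     \<le> Inf {enat (psi (weight_matrix L (\<lambda>i j. H (p i) (q j))) (s*lam) S) | S.
              S \<subseteq> {..<s*rho} \<and> card S = s*lam + 1 \<and>
              psi (weight_matrix L (\<lambda>i j. H (p i) (q j))) (s*lam) S \<noteq> 0}"
proof (rule Inf_greatest)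
  define m where "m = s*lam"
  define n where "n = s*rho"
  define B where "B = (\<lambda>i j. H (p i) (q j))"
  define Aw where "Aw = weight_matrix L B"
  have L: "L > 0" by fact
  have pp: "p permutes {..<m*L}" and qp: "q permutes {..<n*L}" using assms(5,6) by (simp_all add: m_def n_def)
  have bc: "block_circulant m n L B" using assms(7) by (simp add: m_def n_def B_def)
  fix e assume "e \<in> {enat (psi (weight_matrix L (\<lambda>i j. H (p i) (q j))) (s*lam) S) | S.
              S \<subseteq> {..<s*rho} \<and> card S = s*lam + 1 \<and>
              psi (weight_matrix L (\<lambda>i j. H (p i) (q j))) (s*lam) S \<noteq> 0}"
  then obtain S where Sn: "S \<subseteq> {..<n}" and cS: "card S = m + 1" and psnz: "psi Aw m S \<noteq> 0"
    and e: "e = enat (psi Aw m S)"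
    by (auto simp: m_def n_def Aw_def B_def)
  have fS: "finite S" using Sn finite_subset by blast
  obtain S' where S'1: "S' \<subseteq> S" and S'2: "card S' = m" and pcnz: "perm_cols Aw m S' \<noteq> 0"
  proof -
    have "\<exists>S'\<in>{S'. S' \<subseteq> S \<and> card S' = m}. perm_cols Aw m S' \<noteq> 0"
    proof (rule ccontr)
      assume "\<not> ?thesis"
      hence "psi Aw m S = 0" unfolding psi_def by (intro sum.neutral) blast
      with psnz show False by contradiction
    qed
    thus ?thesis using that by blast
  qed
  have "pm Aw {..<m} S' \<noteq> 0" using pcnz perm_cols_pm[of S' m Aw] S'1 S'2 fS finite_subset by metis
  then obtain f where f: "f \<in> Bij {..<m} S'" and fprod: "(\<Prod>x<m. Aw x (f x)) \<noteq> 0"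
  proof -
    have "\<exists>f\<in>Bij {..<m} S'. (\<Prod>x<m. Aw x (f x)) \<noteq> 0"
    proof (rule ccontr)
      assume "\<not> ?thesis"
      hence "pm Aw {..<m} S' = 0" unfolding pm_def by (intro sum.neutral) blast
      with \<open>pm Aw {..<m} S' \<noteq> 0\<close> show False by contradiction
    qed
    thus ?thesis using that by blast
  qed
  have fA: "\<forall>x<m. Aw x (f x) \<ge> 1" using fprod by (auto simp: Suc_le_eq)
  have WA: "\<And>x y. W L (hp L B x y) \<le> Aw x y" using W_hp[OF L] by (simp add: Aw_def)
  obtain V w where VS: "V \<subseteq> S" and ker: "\<forall>x<m. red L (\<Sum>u\<in>V. hp L B x u * w u) = 0"
    and nz: "\<exists>u\<in>V. w u \<noteq> 0" and deg: "\<forall>u. degree (w u) < L"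
    and wtb: "(\<Sum>u\<in>V. wt (w u)) \<le> (\<Sum>u\<in>S. pm Aw {..<m} (S - {u}))"
    using main_vec[where M = "hp L B" and A = Aw, OF L fS cS WA S'1 S'2 f fA] by blast
  have fV: "finite V" using VS fS finite_subset by blast
  define c' where "c' = cw L V w"
  have cc': "card c' \<le> psi Aw m S"
    using card_cw[OF L fV, of w] deg wtb psi_pm[OF fS cS, of Aw] by (simp add: c'_def)
  have c'sub: "c' \<subseteq> {..<n*L}" unfolding c'_def by (rule cw_sub) (use VS Sn in auto)
  have c'ne: "c' \<noteq> {}"
  proof -
    obtain u where u: "u \<in> V" "w u \<noteq> 0" using nz by blast
    then obtain k where k: "coeff (w u) k \<noteq> 0" by (meson leading_coeff_neq_0)
    have "k < L" using le_degree[OF k] deg[rule_format, of u] by linarith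
    hence "u*L+k \<in> c'" using u k unfolding c'_def cw_def by force
    thus ?thesis by blast
  qed
  have c'code: "\<forall>rr<m*L. even (card {jj\<in>c'. B rr jj})"
  proof (intro allI impI)
    fix rr assume rr: "rr < m*L"
    define x where "x = rr div L"
    define i where "i = rr mod L"
    have x: "x < m" using rr L by (simp add: x_def less_mult_imp_div_less)
    have i: "i < L" using L by (simp add: i_def)
    have rrx: "rr = x*L + i" by (simp add: x_def i_def)
    show "even (card {jj\<in>c'. B rr jj})"
      unfolding rrx c'_def
      by (rule parity[OF L bc x i]) (use VS Sn fV deg ker x in auto)
  qed
  define c where "c = q ` c'"
  have injq: "inj q" using qp by (rule permutes_inj)
  have cc: "card c = card c'" unfolding c_def by (rule card_image) (use injq inj_on_subset in blast)
  have ccode: "c \<in> code (s*lam*L) (s*rho*L) H"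
    unfolding code_def mem_Collect_eq
  proof (intro conjI allI impI)
    show "c \<subseteq> {..<s*rho*L}" using c'sub permutes_in_image[OF qp] by (auto simp: c_def n_def)
    fix r assume r: "r < s*lam*L"
    define r' where "r' = inv p r"
    have r'm: "r' < m*L" using r permutes_in_image[OF permutes_inv[OF pp], of r] by (simp add: r'_def m_def)
    have pr': "p r' = r" by (simp add: r'_def permutes_inverses(1)[OF pp])
    have "{j \<in> c. H r j} = q ` {jj \<in> c'. B r' jj}" by (auto simp: c_def B_def pr')
    hence "card {j \<in> c. H r j} = card {jj \<in> c'. B r' jj}"
      by (simp add: card_image inj_on_subset[OF injq])
    thus "even (card {j \<in> c. H r j})" using c'code r'm by simp
  qed
  have cne: "c \<noteq> {}" using c'ne by (simp add: c_def)
  have "dmin (code (s*lam*L) (s*rho*L) H) \<le> enat (card c)"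
    unfolding dmin_def by (rule Inf_lower) (use ccode cne in blast)
  also have "\<dots> \<le> e" using cc cc' e by simp
  finally show "dmin (code (s*lam*L) (s*rho*L) H) \<le> e" .
qed

end
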